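(* Let $S=\{s_1<\dots<s_{k_1}\}$ and $T=\{t_1<\dots<t_{k_2}\}$ be nonempty subsets of $\{1,\dots,n-1\}$, $d=\gcd\{s+t: s\in S,t\in T\}$, $\mathcal{I}_n=\{-n+1,\dots,n-1\}$, and for positive integers $i$ let $P_i=\{\ell\in\mathcal{I}_n: \ell\equiv is_1\pmod d\}$ and $Q_i=\{\sum_{j=1}^{k_1}a_js_j-\sum_{j=1}^{k_2}b_jt_j\in\mathcal{I}_n : a_j,b_j\in\mathbb{Z}_{\ge0},\ \sum_ja_j+\sum_jb_j=i\}$. Then there exists a positive integer $m^\star$ such that $P_{m^\star}\subseteq Q_{m^\star}$. *)

theory Defs
  imports Main "HOL-Number_Theory.Cong"
begin

definition In_set :: "int \<Rightarrow> int set" where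
  "In_set n = {-n+1..n-1}"

definition gcd_ST :: "int set \<Rightarrow> int set \<Rightarrow> int" where
  "gcd_ST S T = Gcd {s + t | s t. s \<in> S \<and> t \<in> T}"

definition P_set :: "int \<Rightarrow> int set \<Rightarrow> int set \<Rightarrow> nat \<Rightarrow> int set" where
  "P_set n S T i = {l \<in> In_set n. [l = int i * Min S] (mod gcd_ST S T)}"

definition Q_set :: "int \<Rightarrow> int set \<Rightarrow> int set \<Rightarrow> nat \<Rightarrow> int set" where
  "Q_set n S T i = {l \<in> In_set n. \<exists>a b :: int \<Rightarrow> nat.
      l = (\<Sum>s\<in>S. int (a s) * s) - (\<Sum>t\<in>T. int (b t) * t) \<and>
      (\<Sum>s\<in>S. a s) + (\<Sum>t\<in>T. b t) = i}"

end

theory Submission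
  imports Defs
begin

lemma bezout_fin:
  fixes f :: "'a \<Rightarrow> int"
  assumes "finite A"
  shows "\<exists>c. (\<Sum>p\<in>A. c p * f p) = Gcd (f ` A)"
  using assms
proof (induction A rule: finite_induct)
  case empty
  then show ?case by simp
next
  case (insert x A)
  then obtain c where c: "(\<Sum>p\<in>A. c p * f p) = Gcd (f ` A)" by blast
  obtain u v where uv: "u * f x + v * Gcd (f ` A) = gcd (f x) (Gcd (f ` A))"
    using bezout_int by blast
  define c' where "c' = (\<lambda>p. if p = x then u else v * c p)"
  have "(\<Sum>p\<in>insert x A. c' p * f p) = u * f x + (\<Sum>p\<in>A. c' p * f p)"
    using insert by (simp add: c'_def)
  also have "(\<Sum>p\<in>A. c' p * f p) = (\<Sum>p\<in>A. v * (c p * f p))"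
    using insert by (intro sum.cong) (auto simp: c'_def)
  also have "\<dots> = v * Gcd (f ` A)" by (simp add: sum_distrib_left[symmetric] c)
  finally show ?case using uv by auto
qed

theorem theorem4p3:
  fixes n :: int and S T :: "int set"
  assumes "S \<noteq> {}" and "T \<noteq> {}"
    and "S \<subseteq> {1..n-1}" and "T \<subseteq> {1..n-1}"
  shows "\<exists>m::nat. m > 0 \<and> P_set n S T m \<subseteq> Q_set n S T m"
proof -
  have fS: "finite S" using assms(3) finite_subset by blast
  have fT: "finite T" using assms(4) finite_subset by blast
  have fST: "finite (S \<times> T)" using fS fT by simp
  define f where "f = (\<lambda>p::int\<times>int. fst p + snd p)"
  define d where "d = gcd_ST S T"
  have dset: "{s + t | s t. s \<in> S \<and> t \<in> T} = f ` (S \<times> T)"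
    by (auto simp: f_def image_iff; blast)
  have d_eq: "d = Gcd (f ` (S \<times> T))" by (simp add: d_def gcd_ST_def dset)
  obtain c where c: "(\<Sum>p\<in>S \<times> T. c p * f p) = d"
    using bezout_fin[OF fST, of f] d_eq by auto
  have ddvd: "d dvd s + t" if "s \<in> S" "t \<in> T" for s t
  proof -
    have "s + t \<in> f ` (S \<times> T)" using that by (force simp: f_def image_iff)
    thus ?thesis using d_eq by (simp add: Gcd_dvd)
  qed
  obtain s0 t0 where s0: "s0 \<in> S" and t0: "t0 \<in> T" using assms(1,2) by blast
  have Sb: "1 \<le> s \<and> s \<le> n - 1" if "s \<in> S" for s using that assms(3) by auto
  have Tb: "1 \<le> t \<and> t \<le> n - 1" if "t \<in> T" for t using that assms(4) by auto
  have "s0 + t0 > 0" using Sb[OF s0] Tb[OF t0] by linarith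
  hence dnz: "d \<noteq> 0" using ddvd[OF s0 t0] by auto
  define s1 where "s1 = Min S"
  have s1S: "s1 \<in> S" using fS assms(1) by (simp add: s1_def)
  define N where "N = 2 * n * (\<Sum>p\<in>S \<times> T. \<bar>c p\<bar>)"
  define M where "M = (\<Sum>p\<in>S \<times> T. f p)"
  have npos: "n \<ge> 2" using Sb[OF s0] by linarith
  have N0: "N \<ge> 0" using npos by (simp add: N_def sum_nonneg)
  have M0: "M \<ge> 0" by (auto simp: M_def f_def intro!: sum_nonneg dest!: Sb Tb)
  define m where "m = nat (1 + N * M)"
  have mi: "int m = 1 + N * M" using N0 M0 by (simp add: m_def)
  have dM: "d dvd M" unfolding M_def by (rule dvd_sum) (auto simp: f_def ddvd)
  have "P_set n S T m \<subseteq> Q_set n S T m"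
  proof
    fix l assume lP: "l \<in> P_set n S T m"
    hence lI: "l \<in> In_set n" and lc: "[l = int m * s1] (mod d)"
      by (auto simp: P_set_def s1_def d_def)
    have "[int m * s1 = s1] (mod d)"
    proof -
      have "d dvd N * M * s1" using dM by simp
      thus ?thesis by (simp add: mi cong_iff_dvd_diff algebra_simps)
    qed
    with lc have "[l = s1] (mod d)" using cong_trans by blast
    then obtain k where k: "l - s1 = d * k"
      by (auto simp: cong_iff_dvd_diff dvd_def)
    have "\<bar>k\<bar> \<le> \<bar>d\<bar> * \<bar>k\<bar>" using dnz
      by (simp add: mult_le_cancel_right1 del: abs_eq_0 ; linarith)
    also have "\<dots> = \<bar>l - s1\<bar>" by (simp add: k abs_mult)
    also have "\<dots> \<le> 2 * n" using lI Sb[OF s1S] by (auto simp: In_set_def)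
    finally have kb: "\<bar>k\<bar> \<le> 2 * n" .
    have kc: "\<bar>k * c p\<bar> \<le> N" if "p \<in> S \<times> T" for p
    proof -
      have "\<bar>k * c p\<bar> = \<bar>k\<bar> * \<bar>c p\<bar>" by (simp add: abs_mult)
      also have "\<dots> \<le> 2 * n * \<bar>c p\<bar>" using kb by (simp add: mult_right_mono)
      also have "\<dots> \<le> 2 * n * (\<Sum>p\<in>S \<times> T. \<bar>c p\<bar>)"
        using npos that fST by (intro mult_left_mono member_le_sum) auto
      finally show ?thesis by (simp add: N_def)
    qed
    define A where "A = (\<lambda>s. (if s = s1 then 1 else 0) + (\<Sum>t\<in>T. N * t + k * c (s, t)))"
    define B where "B = (\<lambda>t. (\<Sum>s\<in>S. N * s - k * c (s, t)))"
    have A0: "A s \<ge> 0" if "s \<in> S" for s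
    proof -
      have "(\<Sum>t\<in>T. N * t + k * c (s, t)) \<ge> 0"
      proof (rule sum_nonneg)
        fix t assume t: "t \<in> T"
        have "N \<le> N * t" using Tb[OF t] N0 by (auto simp: mult_le_cancel_left1)
        moreover have "\<bar>k * c (s,t)\<bar> \<le> N" using kc that t by auto
        ultimately show "N * t + k * c (s, t) \<ge> 0" by linarith
      qed
      thus ?thesis by (simp add: A_def)
    qed
    have B0: "B t \<ge> 0" if "t \<in> T" for t
      unfolding B_def
    proof (rule sum_nonneg)
      fix s assume s: "s \<in> S"
      have "N \<le> N * s" using Sb[OF s] N0 by (auto simp: mult_le_cancel_left1)
      moreover have "\<bar>k * c (s,t)\<bar> \<le> N" using kc that s by auto
      ultimately show "N * s - k * c (s, t) \<ge> 0" by linarith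
    qed
    define a where "a = (\<lambda>s. nat (A s))"
    define b where "b = (\<lambda>t. nat (B t))"
    have aS: "(\<Sum>s\<in>S. int (a s) * s) = (\<Sum>s\<in>S. A s * s)"
      by (rule sum.cong) (auto simp: a_def A0)
    have bT: "(\<Sum>t\<in>T. int (b t) * t) = (\<Sum>t\<in>T. B t * t)"
      by (rule sum.cong) (auto simp: b_def B0)
    have aS': "int (\<Sum>s\<in>S. a s) = (\<Sum>s\<in>S. A s)"
      by (simp add: a_def A0)
    have bT': "int (\<Sum>t\<in>T. b t) = (\<Sum>t\<in>T. B t)"
      by (simp add: b_def B0)
    have ind: "(\<Sum>s\<in>S. (if s = s1 then 1 else 0) * s) = s1"
    proof -
      have "(\<Sum>s\<in>S. (if s = s1 then 1 else 0) * s) = (\<Sum>s\<in>S. if s = s1 then s1 else 0)"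
        by (rule sum.cong) auto
      thus ?thesis using fS s1S by (simp add: sum.delta)
    qed
    have ind': "(\<Sum>s\<in>S. (if s = s1 then 1 else 0::int)) = 1"
      using fS s1S by (simp add: sum.delta)
    have "(\<Sum>s\<in>S. A s * s) - (\<Sum>t\<in>T. B t * t)
        = s1 + (\<Sum>s\<in>S. \<Sum>t\<in>T. (N * t + k * c (s, t)) * s)
             - (\<Sum>t\<in>T. \<Sum>s\<in>S. (N * s - k * c (s, t)) * t)"
      unfolding A_def B_def
      by (simp add: distrib_right sum.distrib ind sum_distrib_right)
    also have "(\<Sum>t\<in>T. \<Sum>s\<in>S. (N * s - k * c (s, t)) * t)
        = (\<Sum>s\<in>S. \<Sum>t\<in>T. (N * s - k * c (s, t)) * t)"
      by (rule sum.swap)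
    also have "s1 + (\<Sum>s\<in>S. \<Sum>t\<in>T. (N * t + k * c (s, t)) * s)
             - (\<Sum>s\<in>S. \<Sum>t\<in>T. (N * s - k * c (s, t)) * t)
        = s1 + (\<Sum>s\<in>S. \<Sum>t\<in>T. k * (c (s, t) * f (s, t)))"
    proof -
      have "(\<Sum>s\<in>S. \<Sum>t\<in>T. (N * t + k * c (s, t)) * s)
             - (\<Sum>s\<in>S. \<Sum>t\<in>T. (N * s - k * c (s, t)) * t)
           = (\<Sum>s\<in>S. \<Sum>t\<in>T. (N * t + k * c (s, t)) * s - (N * s - k * c (s, t)) * t)"
        by (simp only: sum_subtractf[symmetric])
      also have "\<dots> = (\<Sum>s\<in>S. \<Sum>t\<in>T. k * (c (s, t) * f (s, t)))"
        by (intro sum.cong refl) (simp add: f_def algebra_simps)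
      finally show ?thesis by simp
    qed
    also have "\<dots> = s1 + k * d"
      by (simp add: sum.cartesian_product sum_distrib_left[symmetric] c)
    finally have val: "(\<Sum>s\<in>S. A s * s) - (\<Sum>t\<in>T. B t * t) = l"
      using k by (simp add: algebra_simps)
    have "(\<Sum>s\<in>S. A s) + (\<Sum>t\<in>T. B t)
        = 1 + (\<Sum>s\<in>S. \<Sum>t\<in>T. N * t + k * c (s, t))
             + (\<Sum>t\<in>T. \<Sum>s\<in>S. N * s - k * c (s, t))"
      unfolding A_def B_def by (simp add: sum.distrib ind')
    also have "(\<Sum>t\<in>T. \<Sum>s\<in>S. N * s - k * c (s, t))
        = (\<Sum>s\<in>S. \<Sum>t\<in>T. N * s - k * c (s, t))"
      by (rule sum.swap)
    also have "1 + (\<Sum>s\<in>S. \<Sum>t\<in>T. N * t + k * c (s, t))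
             + (\<Sum>s\<in>S. \<Sum>t\<in>T. N * s - k * c (s, t))
        = 1 + (\<Sum>s\<in>S. \<Sum>t\<in>T. N * f (s, t))"
    proof -
      have "(\<Sum>s\<in>S. \<Sum>t\<in>T. N * t + k * c (s, t))
             + (\<Sum>s\<in>S. \<Sum>t\<in>T. N * s - k * c (s, t))
           = (\<Sum>s\<in>S. \<Sum>t\<in>T. (N * t + k * c (s, t)) + (N * s - k * c (s, t)))"
        by (simp only: sum.distrib[symmetric])
      also have "\<dots> = (\<Sum>s\<in>S. \<Sum>t\<in>T. N * f (s, t))"
        by (intro sum.cong refl) (simp add: f_def algebra_simps)
      finally show ?thesis by simp
    qed
    also have "\<dots> = int m"
      by (simp add: mi M_def sum.cartesian_product sum_distrib_left[symmetric])
    finally have cnt: "(\<Sum>s\<in>S. a s) + (\<Sum>t\<in>T. b t) = m"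
      using aS' bT' by linarith
    show "l \<in> Q_set n S T m"
      unfolding Q_set_def using lI val cnt aS bT by (simp only: mem_Collect_eq) (intro conjI exI[of _ a] exI[of _ b]; simp)
  qed
  moreover have "m > 0"
  proof -
    have "N * M \<ge> 0" using N0 M0 by simp
    thus ?thesis using mi by linarith
  qed
  ultimately show ?thesis by blast
qed

end
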